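(* Let $\Theta$ be an overconvergent Dwork operator on $A_0$. Choose rational numbers $b,c_1$ with $0<b\le b_\sigma$ such that $\Theta(X^u)\in L(qb,c_1)$ for all $u$ with $0\le u_i<q$. Then for every real number $c$, $\Theta(L(b,c))\subset L(qb,c+c_1)$.
   Context: $R$ is a complete discrete valuation ring of characteristic $0$ with uniformizer $\pi$, residue field $\mathbf{F}_q$, valuation $\mathrm{ord}_\pi$. Fix $n\ge1$; for $u\in\mathbf{Z}^n_{\ge0}$, $X^u=\prod X_i^{u_i}$, $|u|=\sum u_i$. $A_0=\{\sum a_uX^u:a_u\in R,\ \mathrm{ord}_\pi a_u\to\infty\}$, $A=\{\sum a_uX^u\in A_0:\liminf_{|u|\to\infty}\mathrm{ord}_\pi a_u/|u|>0\}$. $\sigma$ is an $R$-algebra endomorphism of $A_0$ with $\sigma(X_i)=X_i^q+\pi f_i$, $f_i\in A$. For $b>0$ and $c$, $L(b,c)=\{\sum_va_vX^v:a_v\in R,\ \mathrm{ord}_\pi a_v\ge b|v|+c\}$; $b_\sigma>0$ is a fixed rational with $\pi f_i\in L(b_\sigma,0)$ for all $i$. A Dwork operator on $A_0$ is an $R$-linear endomorphism $\Theta$ of $A_0$ with $\Theta(\sigma(a_1)a_2)=a_1\Theta(a_2)$ for $a_1,a_2\in A_0$; it is overconvergent if $\Theta(A)\subset A$. *)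

theory Defs
  imports Complex_Main
begin

(* The ring R is modelled as a type 'a of characteristic 0 (class ring_char_0),
   with valuation ord (only meaningful on nonzero elements; ord 0 = +infinity is
   handled by always guarding with "x \<noteq> 0") and uniformizer \<pi>. *)

definition complete_dvr :: "('a::{comm_ring_1,ring_char_0} \<Rightarrow> int) \<Rightarrow> 'a \<Rightarrow> nat \<Rightarrow> bool" where
  "complete_dvr ord \<pi> q \<longleftrightarrow>
     \<pi> \<noteq> 0 \<and> ord \<pi> = 1 \<and>
     (\<forall>x. x \<noteq> 0 \<longrightarrow> 0 \<le> ord x) \<and>
     (\<forall>x y. x \<noteq> 0 \<longrightarrow> y \<noteq> 0 \<longrightarrow> x * y \<noteq> 0 \<and> ord (x * y) = ord x + ord y) \<and>
     (\<forall>x y. x \<noteq> 0 \<longrightarrow> y \<noteq> 0 \<longrightarrow> x + y \<noteq> 0 \<longrightarrow> min (ord x) (ord y) \<le> ord (x + y)) \<and>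
     (\<forall>x y. x \<noteq> 0 \<longrightarrow> y \<noteq> 0 \<longrightarrow> ord y \<le> ord x \<longrightarrow> y dvd x) \<and>
     (\<forall>s :: nat \<Rightarrow> 'a. (\<forall>k::nat. \<exists>N. \<forall>m\<ge>N. \<forall>m'\<ge>N. \<pi> ^ k dvd (s m - s m'))
          \<longrightarrow> (\<exists>l. \<forall>k::nat. \<exists>N. \<forall>m\<ge>N. \<pi> ^ k dvd (s m - l))) \<and>
     (\<exists>S. finite S \<and> card S = q \<and> (\<forall>x. \<exists>!s. s \<in> S \<and> \<pi> dvd (x - s)))"

(* formal power series in the variables indexed by the finite type 'n:
   exponent vectors u :: 'n \<Rightarrow> nat, a series is its coefficient function *)

definition deg :: "('n::finite \<Rightarrow> nat) \<Rightarrow> nat" where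
  "deg u = (\<Sum>i\<in>UNIV. u i)"

definition pmonom :: "('n \<Rightarrow> nat) \<Rightarrow> ('n \<Rightarrow> nat) \<Rightarrow> 'a::comm_ring_1" where
  "pmonom u = (\<lambda>w. if w = u then 1 else 0)"

definition pone :: "('n \<Rightarrow> nat) \<Rightarrow> 'a::comm_ring_1" where
  "pone = pmonom (\<lambda>_. 0)"

definition pvar :: "'n \<Rightarrow> ('n \<Rightarrow> nat) \<Rightarrow> 'a::comm_ring_1" where
  "pvar i = pmonom (\<lambda>j. if j = i then 1 else 0)"

definition pmult :: "(('n::finite \<Rightarrow> nat) \<Rightarrow> 'a::comm_ring_1) \<Rightarrow> (('n \<Rightarrow> nat) \<Rightarrow> 'a) \<Rightarrow> ('n \<Rightarrow> nat) \<Rightarrow> 'a" where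
  "pmult f g = (\<lambda>w. \<Sum>u\<in>{u. u \<le> w}. f u * g (w - u))"

definition ppow :: "(('n::finite \<Rightarrow> nat) \<Rightarrow> 'a::comm_ring_1) \<Rightarrow> nat \<Rightarrow> ('n \<Rightarrow> nat) \<Rightarrow> 'a" where
  "ppow f k = ((pmult f) ^^ k) pone"

definition psmult :: "'a::comm_ring_1 \<Rightarrow> (('n \<Rightarrow> nat) \<Rightarrow> 'a) \<Rightarrow> ('n \<Rightarrow> nat) \<Rightarrow> 'a" where
  "psmult r f = (\<lambda>u. r * f u)"

definition padd :: "(('n \<Rightarrow> nat) \<Rightarrow> 'a::comm_ring_1) \<Rightarrow> (('n \<Rightarrow> nat) \<Rightarrow> 'a) \<Rightarrow> ('n \<Rightarrow> nat) \<Rightarrow> 'a" where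
  "padd f g = (\<lambda>u. f u + g u)"

definition A0 :: "('a::comm_ring_1 \<Rightarrow> int) \<Rightarrow> (('n \<Rightarrow> nat) \<Rightarrow> 'a) set" where
  "A0 ord = {f. \<forall>k::int. finite {u. f u \<noteq> 0 \<and> ord (f u) < k}}"

definition Aoc :: "('a::comm_ring_1 \<Rightarrow> int) \<Rightarrow> (('n::finite \<Rightarrow> nat) \<Rightarrow> 'a) set" where
  "Aoc ord = {f \<in> A0 ord. \<exists>\<epsilon>::real. \<epsilon> > 0 \<and> (\<exists>N. \<forall>u. N \<le> deg u \<longrightarrow> f u \<noteq> 0 \<longrightarrow>
        \<epsilon> * real (deg u) \<le> real_of_int (ord (f u)))}"

definition Lset :: "('a::comm_ring_1 \<Rightarrow> int) \<Rightarrow> real \<Rightarrow> real \<Rightarrow> (('n::finite \<Rightarrow> nat) \<Rightarrow> 'a) set" where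
  "Lset ord b c = {f. \<forall>v. f v \<noteq> 0 \<longrightarrow> b * real (deg v) + c \<le> real_of_int (ord (f v))}"

definition R_alg_endo :: "('a::comm_ring_1 \<Rightarrow> int) \<Rightarrow> ((('n::finite \<Rightarrow> nat) \<Rightarrow> 'a) \<Rightarrow> (('n \<Rightarrow> nat) \<Rightarrow> 'a)) \<Rightarrow> bool" where
  "R_alg_endo ord \<sigma> \<longleftrightarrow>
     (\<forall>f\<in>A0 ord. \<sigma> f \<in> A0 ord) \<and>
     (\<forall>f\<in>A0 ord. \<forall>g\<in>A0 ord. \<sigma> (padd f g) = padd (\<sigma> f) (\<sigma> g)) \<and>
     (\<forall>f\<in>A0 ord. \<forall>g\<in>A0 ord. \<sigma> (pmult f g) = pmult (\<sigma> f) (\<sigma> g)) \<and>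
     (\<forall>r. \<forall>f\<in>A0 ord. \<sigma> (psmult r f) = psmult r (\<sigma> f)) \<and>
     \<sigma> pone = pone"

definition dwork_op :: "('a::comm_ring_1 \<Rightarrow> int) \<Rightarrow> ((('n::finite \<Rightarrow> nat) \<Rightarrow> 'a) \<Rightarrow> (('n \<Rightarrow> nat) \<Rightarrow> 'a))
     \<Rightarrow> ((('n \<Rightarrow> nat) \<Rightarrow> 'a) \<Rightarrow> (('n \<Rightarrow> nat) \<Rightarrow> 'a)) \<Rightarrow> bool" where
  "dwork_op ord \<sigma> \<Theta> \<longleftrightarrow>
     (\<forall>f\<in>A0 ord. \<Theta> f \<in> A0 ord) \<and>
     (\<forall>f\<in>A0 ord. \<forall>g\<in>A0 ord. \<Theta> (padd f g) = padd (\<Theta> f) (\<Theta> g)) \<and>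
     (\<forall>r. \<forall>f\<in>A0 ord. \<Theta> (psmult r f) = psmult r (\<Theta> f)) \<and>
     (\<forall>a1\<in>A0 ord. \<forall>a2\<in>A0 ord. \<Theta> (pmult (\<sigma> a1) a2) = pmult a1 (\<Theta> a2))"

definition overconvergent :: "('a::comm_ring_1 \<Rightarrow> int) \<Rightarrow> ((('n::finite \<Rightarrow> nat) \<Rightarrow> 'a) \<Rightarrow> (('n \<Rightarrow> nat) \<Rightarrow> 'a)) \<Rightarrow> bool" where
  "overconvergent ord \<Theta> \<longleftrightarrow> (\<forall>f\<in>Aoc ord. \<Theta> f \<in> Aoc ord)"

end

theory Submission
  imports Defs "HOL-Library.FuncSet" "HOL-Library.Function_Algebras"
begin

lemma sum_fun_apply: "(sum F S) x = sum (\<lambda>k. F k x) S"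
  by (induction S rule: infinite_finite_induct) auto

lemma finite_le_fun: "finite {u::'n::finite \<Rightarrow> nat. u \<le> w}"
proof -
  have "{u::'n \<Rightarrow> nat. u \<le> w} \<subseteq> PiE UNIV (\<lambda>i. {..w i})"
    by (auto simp: le_fun_def PiE_UNIV_domain)
  moreover have "finite (PiE (UNIV::'n set) (\<lambda>i. {..w i}))"
    by (rule finite_PiE) auto
  ultimately show ?thesis by (rule finite_subset)
qed

lemma deg_add: "deg (u + v) = deg u + deg v"
  by (simp add: deg_def sum.distrib)

lemma deg_le_fun: "(u::'n::finite\<Rightarrow>nat) \<le> w \<Longrightarrow> deg u + deg (w - u) = deg w"
proof -
  assume "u \<le> w"
  then have "u + (w - u) = w" by (auto simp: le_fun_def fun_eq_iff)
  then show ?thesis by (metis deg_add)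
qed

lemma finite_deg_le: "finite {v::'n::finite\<Rightarrow>nat. deg v \<le> N}"
proof -
  have "{v::'n\<Rightarrow>nat. deg v \<le> N} \<subseteq> {u. u \<le> (\<lambda>_. N)}"
  proof
    fix v :: "'n \<Rightarrow> nat" assume "v \<in> {v. deg v \<le> N}"
    then have "deg v \<le> N" by simp
    moreover have "v i \<le> deg v" for i
      unfolding deg_def by (rule member_le_sum) auto
    ultimately show "v \<in> {u. u \<le> (\<lambda>_. N)}" by (auto simp: le_fun_def intro: order_trans)
  qed
  then show ?thesis using finite_le_fun finite_subset by blast
qed

lemma padd_eq: "padd f g = f + g"
  by (simp add: padd_def fun_eq_iff)

lemma fun_sub_eq_iff:
  fixes u w a :: "'n \<Rightarrow> nat"
  assumes "u \<le> w" shows "(w - u = a) \<longleftrightarrow> (a \<le> w \<and> u = w - a)"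
proof
  assume h: "w - u = a"
  show "a \<le> w \<and> u = w - a"
    using assms unfolding h[symmetric] by (auto simp: le_fun_def fun_eq_iff)
next
  assume "a \<le> w \<and> u = w - a"
  then show "w - u = a" by (auto simp: le_fun_def fun_eq_iff)
qed

lemma pmult_pmonom_right:
  "pmult F (pmonom a) w = (if a \<le> w then F (w - a) else (0::'a::comm_ring_1))"
proof -
  have "pmult F (pmonom a) w = (\<Sum>u\<in>{u. u \<le> w}. if u = w - a then (if a \<le> w then F u else 0) else 0)"
    unfolding pmult_def pmonom_def
    by (rule sum.cong) (auto simp: fun_sub_eq_iff)
  also have "\<dots> = (if a \<le> w then F (w - a) else 0)"
  proof -
    have wa: "w - a \<le> w" by (simp add: le_fun_def)
    show ?thesis by (subst sum.delta[OF finite_le_fun]) (simp add: wa)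
  qed
  finally show ?thesis .
qed

lemma pmult_pmonom_left:
  "pmult (pmonom a) F w = (if a \<le> w then F (w - a) else (0::'a::comm_ring_1))"
proof -
  have "pmult (pmonom a) F w = (\<Sum>u\<in>{u. u \<le> w}. if u = a then (if a \<le> w then F (w - a) else 0) else 0)"
    unfolding pmult_def pmonom_def
    by (rule sum.cong) auto
  also have "\<dots> = (if a \<le> w then F (w - a) else 0)"
    by (simp add: sum.delta[OF finite_le_fun])
  finally show ?thesis .
qed

lemma pmonom_mult: "pmult (pmonom a) (pmonom b) = (pmonom (a + b) :: _ \<Rightarrow> 'a::comm_ring_1)"
proof
  fix w
  show "pmult (pmonom a) (pmonom b) w = (pmonom (a + b) :: _ \<Rightarrow> 'a) w"
  proof (cases "a \<le> w")
    case True
    have "\<And>x. (w x - a x = b x) = (w x = a x + b x)"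
    proof -
      fix x
      have "a x \<le> w x" using True by (simp add: le_fun_def)
      then show "(w x - a x = b x) = (w x = a x + b x)" by arith
    qed
    then have "(w - a = b) = (w = a + b)" by (simp add: fun_eq_iff)
    then show ?thesis using True by (simp only: pmult_pmonom_left) (simp add: pmonom_def)
  next
    case False
    then have "w \<noteq> a + b" by (auto simp: le_fun_def)
    then show ?thesis using False by (simp only: pmult_pmonom_left) (simp add: pmonom_def)
  qed
qed

lemma pmult_add_left: "pmult (F + G) H = pmult F H + (pmult G H :: _ \<Rightarrow> 'a::comm_ring_1)"
  by (simp add: pmult_def fun_eq_iff algebra_simps sum.distrib)

lemma pmult_add_right: "pmult H (F + G) = pmult H F + (pmult H G :: _ \<Rightarrow> 'a::comm_ring_1)"
  by (simp add: pmult_def fun_eq_iff algebra_simps sum.distrib)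

lemma ppow_pmonom: "ppow (pmonom a) k = (pmonom (\<lambda>i. k * a i) :: _ \<Rightarrow> 'a::comm_ring_1)"
proof (induction k)
  case 0 then show ?case by (simp add: ppow_def pone_def)
next
  case (Suc k)
  have "ppow (pmonom a) (Suc k) = pmult (pmonom a) (ppow (pmonom a) k)"
    by (simp add: ppow_def)
  also have "\<dots> = (pmonom (\<lambda>i. Suc k * a i) :: _ \<Rightarrow> 'a)"
    using Suc by (simp add: pmonom_mult plus_fun_def)
  finally show ?case .
qed


definition good :: "('a::comm_ring_1 \<Rightarrow> int) \<Rightarrow> real \<Rightarrow> 'a \<Rightarrow> bool" where
  "good ord r a \<longleftrightarrow> a = 0 \<or> r \<le> real_of_int (ord a)"

lemma Lset_iff: "F \<in> Lset ord b c \<longleftrightarrow> (\<forall>v. good ord (b * real (deg v) + c) (F v))"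
  by (auto simp: Lset_def good_def)

locale vr =
  fixes ord :: "'a::comm_ring_1 \<Rightarrow> int" and \<pi> :: 'a
  assumes ord_nonneg: "x \<noteq> 0 \<Longrightarrow> 0 \<le> ord x"
  and ord_mult: "x \<noteq> 0 \<Longrightarrow> y \<noteq> 0 \<Longrightarrow> x * y \<noteq> 0 \<and> ord (x * y) = ord x + ord y"
  and ord_add: "x \<noteq> 0 \<Longrightarrow> y \<noteq> 0 \<Longrightarrow> x + y \<noteq> 0 \<Longrightarrow> min (ord x) (ord y) \<le> ord (x + y)"
  and ord_dvd: "x \<noteq> 0 \<Longrightarrow> y \<noteq> 0 \<Longrightarrow> ord y \<le> ord x \<Longrightarrow> y dvd x"
  and pi_nz: "\<pi> \<noteq> 0" and ord_pi: "ord \<pi> = 1"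
begin

lemma ord_one: "ord 1 = 0"
  using ord_mult[of 1 1] by simp

lemma ord_m1: "ord (-1) = 0"
proof -
  have "ord ((-1) * (-1)) = ord (-1) + ord (-1)" using ord_mult[of "-1" "-1"] by simp
  then show ?thesis using ord_one by simp
qed

lemma ord_neg: "x \<noteq> 0 \<Longrightarrow> ord (- x) = ord x"
  using ord_mult[of "-1" x] ord_m1 by simp

lemma good_zero[simp]: "good ord r 0"
  by (simp add: good_def)

lemma good_add: "good ord r a \<Longrightarrow> good ord r b \<Longrightarrow> good ord r (a + b)"
  unfolding good_def
proof (elim disjE)
  assume "r \<le> real_of_int (ord a)" "r \<le> real_of_int (ord b)"
  then show "a + b = 0 \<or> r \<le> real_of_int (ord (a + b))"
    using ord_add[of a b]
    by (cases "a = 0"; cases "b = 0"; cases "a + b = 0") (auto simp: min_def split: if_splits)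
qed auto

lemma good_neg: "good ord r a \<Longrightarrow> good ord r (- a)"
  by (cases "a = 0") (auto simp: good_def ord_neg)

lemma good_diff: "good ord r a \<Longrightarrow> good ord r b \<Longrightarrow> good ord r (a - b)"
  using good_add[OF _ good_neg] by (metis diff_conv_add_uminus)

lemma good_sum: "(\<And>x. x \<in> S \<Longrightarrow> good ord r (g x)) \<Longrightarrow> good ord r (\<Sum>x\<in>S. g x)"
  by (induction S rule: infinite_finite_induct) (auto intro: good_add)

lemma good_mono: "good ord r a \<Longrightarrow> r' \<le> r \<Longrightarrow> good ord r' a"
  by (auto simp: good_def)

lemma good_mult: "good ord r a \<Longrightarrow> good ord s b \<Longrightarrow> good ord (r + s) (a * b)"
  unfolding good_def
  using ord_mult[of a b] by (cases "a = 0"; cases "b = 0") auto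

lemma good_nonneg: "good ord 0 a"
  using ord_nonneg[of a] by (auto simp: good_def)

lemma Lset_add: "F \<in> Lset ord b c \<Longrightarrow> G \<in> Lset ord b c \<Longrightarrow> F + G \<in> Lset ord b c"
  by (auto simp: Lset_iff intro: good_add)

lemma Lset_neg: "F \<in> Lset ord b c \<Longrightarrow> - F \<in> Lset ord b c"
  by (auto simp: Lset_iff intro: good_neg)

lemma Lset_diff: "F \<in> Lset ord b c \<Longrightarrow> G \<in> Lset ord b c \<Longrightarrow> F - G \<in> Lset ord b c"
  by (auto simp: Lset_iff intro: good_diff)

lemma Lset_zero: "0 \<in> Lset ord b c"
  by (auto simp: Lset_iff)

lemma Lset_sum: "(\<And>x. x \<in> S \<Longrightarrow> g x \<in> Lset ord b c) \<Longrightarrow> (\<Sum>x\<in>S. g x) \<in> Lset ord b c"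
  by (induction S rule: infinite_finite_induct) (auto intro: Lset_add Lset_zero)

lemma Lset_mono: "F \<in> Lset ord b c \<Longrightarrow> c' \<le> c \<Longrightarrow> F \<in> Lset ord b c'"
  by (auto simp: Lset_iff intro: good_mono)

lemma Lset_mono_b:
  fixes F :: "('n::finite \<Rightarrow> nat) \<Rightarrow> 'a"
  shows "F \<in> Lset ord b c \<Longrightarrow> b' \<le> b \<Longrightarrow> F \<in> Lset ord b' c"
proof -
  assume F: "F \<in> Lset ord b c" and bb: "b' \<le> b"
  show ?thesis unfolding Lset_iff
  proof
    fix v :: "'n \<Rightarrow> nat"
    have "b' * real (deg v) \<le> b * real (deg v)" using bb by (simp add: mult_right_mono)
    then show "good ord (b' * real (deg v) + c) (F v)"
      using F unfolding Lset_iff by (auto intro: good_mono)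
  qed
qed

lemma Lset_pmonom: "pmonom a \<in> Lset ord b (- b * real (deg a))"
  by (auto simp: Lset_iff pmonom_def good_def ord_one)

lemma Lset_psmult: "r \<noteq> 0 \<Longrightarrow> F \<in> Lset ord b c \<Longrightarrow> psmult r F \<in> Lset ord b (c + ord r)"
proof -
  assume r: "r \<noteq> 0" and F: "F \<in> Lset ord b c"
  show ?thesis unfolding Lset_iff psmult_def
  proof
    fix v
    have "good ord (real_of_int (ord r) + (b * real (deg v) + c)) (r * F v)"
      by (rule good_mult) (use r F in \<open>auto simp: good_def Lset_iff\<close>)
    then show "good ord (b * real (deg v) + (c + real_of_int (ord r))) (r * F v)"
      by (simp add: algebra_simps)
  qed
qed

lemma Lset_pmult: "F \<in> Lset ord b c \<Longrightarrow> G \<in> Lset ord b c' \<Longrightarrow> pmult F G \<in> Lset ord b (c + c')"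
proof -
  assume F: "F \<in> Lset ord b c" and G: "G \<in> Lset ord b c'"
  show ?thesis unfolding Lset_iff pmult_def
  proof
    fix w
    show "good ord (b * real (deg w) + (c + c')) (\<Sum>u\<in>{u. u \<le> w}. F u * G (w - u))"
    proof (rule good_sum)
      fix u assume "u \<in> {u. u \<le> w}"
      then have d: "deg u + deg (w - u) = deg w" by (simp add: deg_le_fun)
      have "good ord ((b * real (deg u) + c) + (b * real (deg (w - u)) + c')) (F u * G (w - u))"
        by (rule good_mult) (use F G in \<open>auto simp: Lset_iff\<close>)
      moreover have "(b * real (deg u) + c) + (b * real (deg (w - u)) + c') = b * real (deg w) + (c + c')"
      proof -
        have "real (deg u) + real (deg (w - u)) = real (deg w)" using d by (metis of_nat_add)
        then have "b * real (deg u) + b * real (deg (w - u)) = b * real (deg w)"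
          by (metis distrib_left)
        then show ?thesis by simp
      qed
      ultimately show "good ord (b * real (deg w) + (c + c')) (F u * G (w - u))" by simp
    qed
  qed
qed


lemma A0_iff: "F \<in> A0 ord \<longleftrightarrow> (\<forall>k. finite {u. F u \<noteq> 0 \<and> ord (F u) < k})"
  by (simp add: A0_def)

lemma A0_zero: "0 \<in> A0 ord"
  by (simp add: A0_def)

lemma A0_add: "F \<in> A0 ord \<Longrightarrow> G \<in> A0 ord \<Longrightarrow> F + G \<in> A0 ord"
proof -
  assume F: "F \<in> A0 ord" and G: "G \<in> A0 ord"
  show ?thesis unfolding A0_iff
  proof
    fix k
    have "{u. (F + G) u \<noteq> 0 \<and> ord ((F + G) u) < k} \<subseteq>
          {u. F u \<noteq> 0 \<and> ord (F u) < k} \<union> {u. G u \<noteq> 0 \<and> ord (G u) < k}"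
    proof
      fix u assume "u \<in> {u. (F + G) u \<noteq> 0 \<and> ord ((F + G) u) < k}"
      then have h: "F u + G u \<noteq> 0" "ord (F u + G u) < k" by auto
      show "u \<in> {u. F u \<noteq> 0 \<and> ord (F u) < k} \<union> {u. G u \<noteq> 0 \<and> ord (G u) < k}"
        using h ord_add[of "F u" "G u"]
        by (cases "F u = 0"; cases "G u = 0") (auto simp: min_def split: if_splits)
    qed
    then show "finite {u. (F + G) u \<noteq> 0 \<and> ord ((F + G) u) < k}"
      using F G unfolding A0_iff by (meson finite_Un finite_subset)
  qed
qed

lemma A0_psmult: "F \<in> A0 ord \<Longrightarrow> psmult r F \<in> A0 ord"
proof -
  assume F: "F \<in> A0 ord"
  show ?thesis unfolding A0_iff
  proof
    fix k
    have "{u. psmult r F u \<noteq> 0 \<and> ord (psmult r F u) < k} \<subseteq> {u. F u \<noteq> 0 \<and> ord (F u) < k}"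
    proof
      fix u assume "u \<in> {u. psmult r F u \<noteq> 0 \<and> ord (psmult r F u) < k}"
      then have h: "r * F u \<noteq> 0" "ord (r * F u) < k" by (auto simp: psmult_def)
      then have "r \<noteq> 0" "F u \<noteq> 0" by auto
      then show "u \<in> {u. F u \<noteq> 0 \<and> ord (F u) < k}"
        using h ord_mult[of r "F u"] ord_nonneg[of r] by auto
    qed
    then show "finite {u. psmult r F u \<noteq> 0 \<and> ord (psmult r F u) < k}"
      using F unfolding A0_iff by (meson finite_subset)
  qed
qed

lemma A0_uminus: "F \<in> A0 ord \<Longrightarrow> - F \<in> A0 ord"
proof -
  assume "F \<in> A0 ord"
  then have "psmult (-1) F \<in> A0 ord" by (rule A0_psmult)
  moreover have "psmult (-1) F = - F" by (simp add: psmult_def fun_eq_iff)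
  ultimately show ?thesis by simp
qed

lemma A0_diff: "F \<in> A0 ord \<Longrightarrow> G \<in> A0 ord \<Longrightarrow> F - G \<in> A0 ord"
  using A0_add[OF _ A0_uminus] by (metis diff_conv_add_uminus)

lemma A0_sum: "(\<And>x. x \<in> S \<Longrightarrow> g x \<in> A0 ord) \<Longrightarrow> (\<Sum>x\<in>S. g x) \<in> A0 ord"
  by (induction S rule: infinite_finite_induct) (auto intro: A0_add A0_zero)

lemma A0_pmonom: "pmonom a \<in> A0 ord"
proof -
  have "{u. pmonom a u \<noteq> (0::'a) \<and> ord (pmonom a u) < k} \<subseteq> {a}" for k
    by (auto simp: pmonom_def)
  then show ?thesis unfolding A0_iff by (meson finite.emptyI finite_insert finite_subset)
qed

lemma A0_shift_right:
  fixes F :: "('n::finite \<Rightarrow> nat) \<Rightarrow> 'a"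
  assumes F: "F \<in> A0 ord" shows "pmult F (pmonom a) \<in> A0 ord"
  unfolding A0_iff
proof
  fix k
  have "{u. pmult F (pmonom a) u \<noteq> 0 \<and> ord (pmult F (pmonom a) u) < k} \<subseteq>
        (\<lambda>x. x + a) ` {u. F u \<noteq> 0 \<and> ord (F u) < k}"
  proof
    fix u assume "u \<in> {u. pmult F (pmonom a) u \<noteq> 0 \<and> ord (pmult F (pmonom a) u) < k}"
    then have h: "a \<le> u" "F (u - a) \<noteq> 0" "ord (F (u - a)) < k"
      by (auto simp: pmult_pmonom_right split: if_splits)
    have "u = (u - a) + a" using h(1) by (auto simp: le_fun_def fun_eq_iff)
    then show "u \<in> (\<lambda>x. x + a) ` {u. F u \<noteq> 0 \<and> ord (F u) < k}"
      using h by blast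
  qed
  then show "finite {u. pmult F (pmonom a) u \<noteq> 0 \<and> ord (pmult F (pmonom a) u) < k}"
    using F unfolding A0_iff by (meson finite_imageI finite_subset)
qed

lemma A0_shift_left:
  fixes F :: "('n::finite \<Rightarrow> nat) \<Rightarrow> 'a"
  assumes F: "F \<in> A0 ord" shows "pmult (pmonom a) F \<in> A0 ord"
proof -
  have "pmult (pmonom a) F = pmult F (pmonom a)"
    by (simp add: fun_eq_iff pmult_pmonom_left pmult_pmonom_right)
  then show ?thesis using A0_shift_right[OF F] by simp
qed

lemma Lset_A0:
  fixes F :: "('n::finite \<Rightarrow> nat) \<Rightarrow> 'a"
  assumes b: "b > 0" and F: "F \<in> Lset ord b c" shows "F \<in> A0 ord"
  unfolding A0_iff
proof
  fix k
  have "{u. F u \<noteq> 0 \<and> ord (F u) < k} \<subseteq> {v. deg v \<le> nat \<lceil>(k - c) / b\<rceil>}"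
  proof
    fix u assume "u \<in> {u. F u \<noteq> 0 \<and> ord (F u) < k}"
    then have h: "F u \<noteq> 0" "ord (F u) < k" by auto
    then have "b * real (deg u) + c < k" using F unfolding Lset_def by force
    then have "real (deg u) < (k - c) / b" using b by (simp add: field_simps)
    then have "real (deg u) \<le> real (nat \<lceil>(k - c) / b\<rceil>)"
      by linarith
    then show "u \<in> {v. deg v \<le> nat \<lceil>(k - c) / b\<rceil>}" by simp
  qed
  then show "finite {u. F u \<noteq> 0 \<and> ord (F u) < k}"
    using finite_deg_le finite_subset by blast
qed


lemma pi_pow: "\<pi> ^ M \<noteq> 0 \<and> ord (\<pi> ^ M) = int M"
proof (induction M)
  case 0 then show ?case by (simp add: ord_one)
next
  case (Suc M)
  then show ?case using ord_mult[of \<pi> "\<pi> ^ M"] pi_nz ord_pi by simp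
qed

lemma divide_out:
  assumes F: "F \<in> A0 ord" and lo: "\<And>u. F u \<noteq> 0 \<Longrightarrow> int M \<le> ord (F u)"
  shows "\<exists>H\<in>A0 ord. F = psmult (\<pi> ^ M) H"
proof -
  define H where "H u = (if F u = 0 then 0 else SOME h. F u = \<pi> ^ M * h)" for u
  have FH: "F u = \<pi> ^ M * H u" for u
  proof (cases "F u = 0")
    case True then show ?thesis by (simp add: H_def)
  next
    case False
    have "\<pi> ^ M dvd F u" using ord_dvd[of "F u" "\<pi> ^ M"] pi_pow[of M] lo[OF False] False by simp
    then have "\<exists>h. F u = \<pi> ^ M * h" by (auto simp: dvd_def)
    then show ?thesis using False unfolding H_def by (auto intro: someI_ex)
  qed
  have "H \<in> A0 ord" unfolding A0_iff
  proof
    fix k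
    have "{u. H u \<noteq> 0 \<and> ord (H u) < k} \<subseteq> {u. F u \<noteq> 0 \<and> ord (F u) < k + int M}"
    proof
      fix u assume "u \<in> {u. H u \<noteq> 0 \<and> ord (H u) < k}"
      then have h: "H u \<noteq> 0" "ord (H u) < k" by auto
      then have "F u \<noteq> 0 \<and> ord (F u) = int M + ord (H u)"
        using FH[of u] ord_mult[of "\<pi> ^ M" "H u"] pi_pow[of M] by auto
      then show "u \<in> {u. F u \<noteq> 0 \<and> ord (F u) < k + int M}" using h by auto
    qed
    then show "finite {u. H u \<noteq> 0 \<and> ord (H u) < k}"
      using F unfolding A0_iff by (meson finite_subset)
  qed
  moreover have "F = psmult (\<pi> ^ M) H" using FH by (simp add: psmult_def fun_eq_iff)
  ultimately show ?thesis by blast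
qed

lemma approx_Lset:
  fixes x :: "('n::finite \<Rightarrow> nat) \<Rightarrow> 'a"
  assumes ap: "\<And>N. \<exists>p\<in>Lset ord \<beta> \<gamma>. \<forall>z. good ord N (x z - p z)"
  shows "x \<in> Lset ord \<beta> \<gamma>"
  unfolding Lset_iff
proof
  fix z :: "'n \<Rightarrow> nat"
  obtain p where p: "p \<in> Lset ord \<beta> \<gamma>" and c: "\<forall>y. good ord (\<beta> * real (deg z) + \<gamma>) (x y - p y)"
    using ap[of "\<beta> * real (deg z) + \<gamma>"] by blast
  have "good ord (\<beta> * real (deg z) + \<gamma>) ((x z - p z) + p z)"
    by (rule good_add) (use p c in \<open>auto simp: Lset_iff\<close>)
  then show "good ord (\<beta> * real (deg z) + \<gamma>) (x z)" by simp
qed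

end


lemma deg_scale: "deg (\<lambda>i. k * w i) = k * deg w"
  by (simp add: deg_def sum_distrib_left)

definition ev :: "'n \<Rightarrow> 'n \<Rightarrow> nat" where "ev i = (\<lambda>j. if j = i then 1 else 0)"

lemma deg_ev: "deg (ev i :: 'n::finite \<Rightarrow> nat) = 1"
  by (simp add: deg_def ev_def)

locale dw = vr ord \<pi>
  for ord :: "'a::comm_ring_1 \<Rightarrow> int" and \<pi> :: 'a +
  fixes \<sigma> \<Theta> :: "(('n::finite \<Rightarrow> nat) \<Rightarrow> 'a) \<Rightarrow> (('n \<Rightarrow> nat) \<Rightarrow> 'a)"
    and f :: "'n \<Rightarrow> ('n \<Rightarrow> nat) \<Rightarrow> 'a"
    and q :: nat and b bs c1 :: real
  assumes \<sigma>_endo: "R_alg_endo ord \<sigma>"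
    and \<sigma>_X: "\<forall>i. \<sigma> (pvar i) = padd (ppow (pvar i) q) (psmult \<pi> (f i))"
    and \<Theta>_dwork: "dwork_op ord \<sigma> \<Theta>"
    and b_pos: "0 < b" and b_le: "b \<le> bs"
    and f_L: "\<forall>i. psmult \<pi> (f i) \<in> Lset ord bs 0"
    and \<Theta>_basis: "\<forall>u. (\<forall>i. u i < q) \<longrightarrow> \<Theta> (pmonom u) \<in> Lset ord (real q * b) c1"
    and q_pos: "0 < q"
begin

lemma \<sigma>_A0: "F \<in> A0 ord \<Longrightarrow> \<sigma> F \<in> A0 ord"
  using \<sigma>_endo by (simp add: R_alg_endo_def)

lemma \<sigma>_add: "F \<in> A0 ord \<Longrightarrow> G \<in> A0 ord \<Longrightarrow> \<sigma> (F + G) = \<sigma> F + \<sigma> G"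
  using \<sigma>_endo by (simp add: R_alg_endo_def padd_eq)

lemma \<sigma>_mult: "F \<in> A0 ord \<Longrightarrow> G \<in> A0 ord \<Longrightarrow> \<sigma> (pmult F G) = pmult (\<sigma> F) (\<sigma> G)"
  using \<sigma>_endo by (simp add: R_alg_endo_def)

lemma \<sigma>_one: "\<sigma> pone = pone"
  using \<sigma>_endo by (simp add: R_alg_endo_def)

lemma \<Theta>_A0: "F \<in> A0 ord \<Longrightarrow> \<Theta> F \<in> A0 ord"
  using \<Theta>_dwork by (simp add: dwork_op_def)

lemma \<Theta>_add: "F \<in> A0 ord \<Longrightarrow> G \<in> A0 ord \<Longrightarrow> \<Theta> (F + G) = \<Theta> F + \<Theta> G"
  using \<Theta>_dwork by (simp add: dwork_op_def padd_eq)

lemma \<Theta>_smult: "F \<in> A0 ord \<Longrightarrow> \<Theta> (psmult r F) = psmult r (\<Theta> F)"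
  using \<Theta>_dwork by (simp add: dwork_op_def)

lemma \<Theta>_dw: "F \<in> A0 ord \<Longrightarrow> G \<in> A0 ord \<Longrightarrow> \<Theta> (pmult (\<sigma> F) G) = pmult F (\<Theta> G)"
  using \<Theta>_dwork by (simp add: dwork_op_def)

lemma \<Theta>_zero: "\<Theta> 0 = 0"
proof -
  have "\<Theta> (psmult 0 0) = psmult 0 (\<Theta> 0)" using \<Theta>_smult[OF A0_zero] .
  moreover have "psmult 0 F = 0" for F :: "('n \<Rightarrow> nat) \<Rightarrow> 'a" by (simp add: psmult_def fun_eq_iff)
  ultimately show ?thesis by simp
qed

lemma \<Theta>_sum: "(\<And>x. x \<in> S \<Longrightarrow> g x \<in> A0 ord) \<Longrightarrow> \<Theta> (\<Sum>x\<in>S. g x) = (\<Sum>x\<in>S. \<Theta> (g x))"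
proof (induction S rule: infinite_finite_induct)
  case (infinite A) then show ?case using \<Theta>_zero by (metis sum.infinite)
next
  case empty then show ?case using \<Theta>_zero by (metis sum.empty)
next
  case (insert x F)
  have "\<Theta> (\<Sum>x\<in>insert x F. g x) = \<Theta> (g x + (\<Sum>x\<in>F. g x))"
    using insert.hyps by simp
  also have "\<dots> = \<Theta> (g x) + \<Theta> (\<Sum>x\<in>F. g x)"
    by (rule \<Theta>_add) (use insert.prems in \<open>auto intro: A0_sum\<close>)
  also have "\<dots> = \<Theta> (g x) + (\<Sum>x\<in>F. \<Theta> (g x))" using insert by simp
  finally show ?case by (simp only: sum.insert[OF insert.hyps])
qed

lemma \<Theta>_floor:
  assumes F: "F \<in> A0 ord" and g: "\<And>u. good ord r (F u)"
  shows "good ord r (\<Theta> F z)"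
proof (cases "r \<le> 0")
  case True then show ?thesis using good_nonneg good_mono by blast
next
  case False
  define M where "M = nat \<lceil>r\<rceil>"
  have rM: "r \<le> real M" using False unfolding M_def by linarith
  have "\<And>u. F u \<noteq> 0 \<Longrightarrow> int M \<le> ord (F u)"
  proof -
    fix u assume "F u \<noteq> 0"
    then have "r \<le> real_of_int (ord (F u))" using g[of u] by (simp add: good_def)
    then have "\<lceil>r\<rceil> \<le> ord (F u)" by (simp add: ceiling_le_iff)
    then show "int M \<le> ord (F u)" unfolding M_def using False by simp
  qed
  then obtain H where H: "H \<in> A0 ord" and FH: "F = psmult (\<pi> ^ M) H" using divide_out[OF F] by blast
  have "\<Theta> F z = \<pi> ^ M * \<Theta> H z" using \<Theta>_smult[OF H] FH by (simp add: psmult_def)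
  moreover have "good ord (real M + 0) (\<pi> ^ M * \<Theta> H z)"
    by (rule good_mult) (use pi_pow[of M] good_nonneg in \<open>auto simp: good_def\<close>)
  ultimately show ?thesis using rM good_mono by fastforce
qed


definition D :: "('n \<Rightarrow> nat) \<Rightarrow> ('n \<Rightarrow> nat) \<Rightarrow> 'a" where
  "D w = \<sigma> (pmonom w) - pmonom (\<lambda>i. q * w i)"

lemma \<sigma>_pvar: "\<sigma> (pmonom (ev i)) = pmonom (\<lambda>j. q * ev i j) + psmult \<pi> (f i)"
  using \<sigma>_X ppow_pmonom[of "ev i" q] by (simp add: pvar_def ev_def padd_eq)

lemma E_L: "psmult \<pi> (f i) \<in> Lset ord b 0"
  using f_L Lset_mono_b b_le by blast

lemma D_L_aux: "\<forall>w. deg w = n \<longrightarrow> D w \<in> Lset ord b (real q * b - real q * b * real (deg w))"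
proof (induction n)
  case 0
  show ?case
  proof (intro allI impI)
    fix w :: "'n \<Rightarrow> nat" assume "deg w = 0"
    then have "w = (\<lambda>_. 0)" by (simp add: deg_def fun_eq_iff)
    then have "D w = 0" by (simp add: D_def pone_def[symmetric] \<sigma>_one)
    then show "D w \<in> Lset ord b (real q * b - real q * b * real (deg w))" by (simp add: Lset_zero)
  qed
next
  case (Suc n)
  show ?case
  proof (intro allI impI)
    fix w :: "'n \<Rightarrow> nat" assume dw: "deg w = Suc n"
    obtain i where wi: "w i > 0"
    proof (rule ccontr)
      assume "\<not> thesis"
      then have "w = (\<lambda>_. 0)" using that by (auto simp: fun_eq_iff)
      then show False using dw by (simp add: deg_def)
    qed
    define w' where "w' = w - ev i"
    have ww: "w = w' + ev i" using wi by (auto simp: w'_def ev_def fun_eq_iff)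
    then have dw': "deg w' = n" using dw by (simp add: deg_add deg_ev)
    define A where "A = (pmonom (\<lambda>j. q * w' j) :: ('n \<Rightarrow> nat) \<Rightarrow> 'a)"
    define B where "B = (pmonom (\<lambda>j. q * ev i j) :: ('n \<Rightarrow> nat) \<Rightarrow> 'a)"
    define E where "E = psmult \<pi> (f i)"
    have D': "D w' \<in> Lset ord b (real q * b - real q * b * real n)" using Suc.IH dw' by blast
    have s1: "\<sigma> (pmonom w') = A + D w'" by (simp add: D_def A_def)
    have s2: "\<sigma> (pmonom (ev i)) = B + E" by (simp add: \<sigma>_pvar B_def E_def)
    have "\<sigma> (pmonom w) = \<sigma> (pmult (pmonom w') (pmonom (ev i)))" by (simp add: ww pmonom_mult)
    also have "\<dots> = pmult (A + D w') (B + E)" by (simp add: \<sigma>_mult A0_pmonom s1 s2)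
    also have "\<dots> = pmult A B + (pmult A E + pmult (D w') B + pmult (D w') E)"
      by (simp add: pmult_add_left pmult_add_right add_ac)
    finally have e1: "\<sigma> (pmonom w) = pmult A B + (pmult A E + pmult (D w') B + pmult (D w') E)" .
    have "(\<lambda>j. q * w' j) + (\<lambda>j. q * ev i j) = (\<lambda>j. q * w j)" by (simp add: ww fun_eq_iff algebra_simps)
    then have AB: "pmult A B = pmonom (\<lambda>j. q * w j)" by (simp add: A_def B_def pmonom_mult)
    have eqD: "D w = pmult A E + pmult (D w') B + pmult (D w') E"
      unfolding D_def e1 AB by simp
    let ?t = "real q * b - real q * b * real (deg w)"
    have t: "?t = - (real q * b * real n)" using dw by (simp add: algebra_simps)
    have LA: "A \<in> Lset ord b (- (real q * b * real n))"
      using Lset_pmonom[of "\<lambda>j. q * w' j" b] unfolding A_def deg_scale dw' by (simp add: algebra_simps)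
    have LB: "B \<in> Lset ord b (- (real q * b))"
      using Lset_pmonom[of "\<lambda>j. q * ev i j" b] unfolding B_def deg_scale deg_ev by (simp add: algebra_simps)
    have LE: "E \<in> Lset ord b 0" using E_L by (simp add: E_def)
    have qb: "0 \<le> real q * b" using b_pos by simp
    have "pmult A E \<in> Lset ord b ?t"
      using Lset_pmult[OF LA LE] t by simp
    moreover have "pmult (D w') B \<in> Lset ord b ?t"
    proof -
      have "real q * b - real q * b * real n + - (real q * b) = ?t" using t by linarith
      then show ?thesis using Lset_pmult[OF D' LB] by metis
    qed
    moreover have "pmult (D w') E \<in> Lset ord b ?t"
      using Lset_pmult[OF D' LE] t qb by (auto intro: Lset_mono)
    ultimately show "D w \<in> Lset ord b ?t" unfolding eqD by (intro Lset_add)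
  qed
qed

lemma D_L: "D w \<in> Lset ord b (real q * b - real q * b * real (deg w))"
  using D_L_aux by blast


definition ud :: "('n \<Rightarrow> nat) \<Rightarrow> 'n \<Rightarrow> nat" where "ud v = (\<lambda>i. v i mod q)"
definition wd :: "('n \<Rightarrow> nat) \<Rightarrow> 'n \<Rightarrow> nat" where "wd v = (\<lambda>i. v i div q)"

lemma v_decomp: "v = ud v + (\<lambda>i. q * wd v i)"
  by (simp add: ud_def wd_def fun_eq_iff)

lemma deg_decomp: "deg v = deg (ud v) + q * deg (wd v)"
  by (metis v_decomp deg_add deg_scale)

lemma ud_lt: "ud v i < q"
  using q_pos by (simp add: ud_def)

lemma mono1: "pmult (\<sigma> (pmonom w)) (pmonom u) = pmonom (u + (\<lambda>i. q * w i)) + pmult (D w) (pmonom u)"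
proof -
  have "\<sigma> (pmonom w) = pmonom (\<lambda>i. q * w i) + D w" by (simp add: D_def)
  then show ?thesis by (simp add: pmult_add_left pmonom_mult add.commute)
qed

lemma psmult_diff: "psmult r X - psmult r Y = psmult r (X - Y)"
  by (simp add: psmult_def fun_eq_iff right_diff_distrib)

lemma psmult_zero: "psmult 0 X = 0"
  by (simp add: psmult_def fun_eq_iff)

lemma poly_step:
  assumes S: "finite S" and gS: "\<And>v. v \<in> S \<Longrightarrow> good ord (b * real (deg v) + c) (g v)"
  shows "\<exists>p\<in>Lset ord (real q * b) (c + c1). \<exists>g'\<in>Lset ord b (c + real q * b).
           \<Theta> (\<Sum>v\<in>S. psmult (g v) (pmonom v)) = p + \<Theta> g'"
proof -
  define T where "T v = pmult (\<sigma> (pmonom (wd v))) (pmonom (ud v))" for v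
  have TA: "T v \<in> A0 ord" for v unfolding T_def by (intro A0_shift_right \<sigma>_A0 A0_pmonom)
  define gt where "gt = (\<Sum>v\<in>S. psmult (g v) (pmonom v))"
  define Y where "Y = (\<Sum>v\<in>S. psmult (g v) (T v))"
  define g' where "g' = gt - Y"
  have gtA: "gt \<in> A0 ord" unfolding gt_def by (intro A0_sum A0_psmult A0_pmonom)
  have YA: "Y \<in> A0 ord" unfolding Y_def by (intro A0_sum A0_psmult TA)
  have g'A: "g' \<in> A0 ord" unfolding g'_def using gtA YA by (rule A0_diff)
  have Tv: "pmonom v - T v = - pmult (D (wd v)) (pmonom (ud v))" for v
  proof -
    have "T v = pmonom v + pmult (D (wd v)) (pmonom (ud v))"
      unfolding T_def mono1 using v_decomp[of v] by simp
    then show ?thesis by simp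
  qed
  have g'eq: "g' = (\<Sum>v\<in>S. psmult (g v) (- pmult (D (wd v)) (pmonom (ud v))))"
    unfolding g'_def gt_def Y_def by (simp add: sum_subtractf[symmetric] psmult_diff Tv)
  have g'L: "g' \<in> Lset ord b (c + real q * b)"
    unfolding g'eq
  proof (rule Lset_sum)
    fix v assume v: "v \<in> S"
    show "psmult (g v) (- pmult (D (wd v)) (pmonom (ud v))) \<in> Lset ord b (c + real q * b)"
    proof (cases "g v = 0")
      case True then show ?thesis by (simp add: psmult_zero Lset_zero)
    next
      case False
      have o: "b * real (deg v) + c \<le> real_of_int (ord (g v))" using gS[OF v] False by (simp add: good_def)
      have dv: "real (deg v) = real (deg (ud v)) + real q * real (deg (wd v))"
        using deg_decomp[of v] by (metis of_nat_add of_nat_mult)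
      have "pmult (D (wd v)) (pmonom (ud v)) \<in>
              Lset ord b ((real q * b - real q * b * real (deg (wd v))) + (- b * real (deg (ud v))))"
        by (rule Lset_pmult[OF D_L Lset_pmonom])
      then have "- pmult (D (wd v)) (pmonom (ud v)) \<in>
              Lset ord b ((real q * b - real q * b * real (deg (wd v))) + (- b * real (deg (ud v))))"
        by (rule Lset_neg)
      then have "psmult (g v) (- pmult (D (wd v)) (pmonom (ud v))) \<in>
              Lset ord b ((real q * b - real q * b * real (deg (wd v))) + (- b * real (deg (ud v))) + ord (g v))"
        by (rule Lset_psmult[OF False])
      moreover have "c + real q * b \<le> (real q * b - real q * b * real (deg (wd v))) + (- b * real (deg (ud v))) + ord (g v)"
        using o dv by (simp add: algebra_simps)
      ultimately show ?thesis by (rule Lset_mono)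
    qed
  qed
  have "gt = Y + g'" by (simp add: g'_def)
  then have "\<Theta> gt = \<Theta> Y + \<Theta> g'" using \<Theta>_add[OF YA g'A] by simp
  moreover have "\<Theta> Y = (\<Sum>v\<in>S. psmult (g v) (pmult (pmonom (wd v)) (\<Theta> (pmonom (ud v)))))"
  proof -
    have "\<Theta> Y = (\<Sum>v\<in>S. \<Theta> (psmult (g v) (T v)))" unfolding Y_def
      by (rule \<Theta>_sum) (intro A0_psmult TA)
    also have "\<dots> = (\<Sum>v\<in>S. psmult (g v) (pmult (pmonom (wd v)) (\<Theta> (pmonom (ud v)))))"
    proof (rule sum.cong)
      fix v
      have "\<Theta> (T v) = pmult (pmonom (wd v)) (\<Theta> (pmonom (ud v)))"
        unfolding T_def by (simp add: \<Theta>_dw A0_pmonom)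
      then show "\<Theta> (psmult (g v) (T v)) = psmult (g v) (pmult (pmonom (wd v)) (\<Theta> (pmonom (ud v))))"
        using \<Theta>_smult[OF TA] by simp
    qed simp
    finally show ?thesis .
  qed
  moreover have "\<Theta> Y \<in> Lset ord (real q * b) (c + c1)"
    unfolding calculation(2)
  proof (rule Lset_sum)
    fix v assume v: "v \<in> S"
    show "psmult (g v) (pmult (pmonom (wd v)) (\<Theta> (pmonom (ud v)))) \<in> Lset ord (real q * b) (c + c1)"
    proof (cases "g v = 0")
      case True then show ?thesis by (simp add: psmult_zero Lset_zero)
    next
      case False
      have o: "b * real (deg v) + c \<le> real_of_int (ord (g v))" using gS[OF v] False by (simp add: good_def)
      have dv: "real (deg v) = real (deg (ud v)) + real q * real (deg (wd v))"
        using deg_decomp[of v] by (metis of_nat_add of_nat_mult)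
      have th: "\<Theta> (pmonom (ud v)) \<in> Lset ord (real q * b) c1" using \<Theta>_basis ud_lt by blast
      have "pmult (pmonom (wd v)) (\<Theta> (pmonom (ud v))) \<in>
              Lset ord (real q * b) (- (real q * b) * real (deg (wd v)) + c1)"
        by (rule Lset_pmult[OF Lset_pmonom th])
      then have "psmult (g v) (pmult (pmonom (wd v)) (\<Theta> (pmonom (ud v)))) \<in>
              Lset ord (real q * b) (- (real q * b) * real (deg (wd v)) + c1 + ord (g v))"
        by (rule Lset_psmult[OF False])
      moreover have "c + c1 \<le> - (real q * b) * real (deg (wd v)) + c1 + ord (g v)"
      proof -
        have "0 \<le> b * real (deg (ud v))" using b_pos by simp
        then show ?thesis using o dv by (simp add: algebra_simps)
      qed
      ultimately show ?thesis by (rule Lset_mono)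
    qed
  qed
  ultimately show ?thesis using g'L unfolding gt_def by blast
qed


lemma Lset_good0: "g \<in> Lset ord b c \<Longrightarrow> good ord c (g u)"
proof -
  assume "g \<in> Lset ord b c"
  then have "good ord (b * real (deg u) + c) (g u)" by (simp add: Lset_iff)
  moreover have "c \<le> b * real (deg u) + c" using b_pos by simp
  ultimately show ?thesis by (rule good_mono)
qed

lemma main_K: "\<forall>c g. g \<in> Lset ord b c \<longrightarrow>
   (\<exists>p\<in>Lset ord (real q * b) (c + c1). \<forall>z. good ord (c + real K * (real q * b)) (\<Theta> g z - p z))"
proof (induction K)
  case 0
  show ?case
  proof (intro allI impI)
    fix c and g :: "('n \<Rightarrow> nat) \<Rightarrow> 'a" assume g: "g \<in> Lset ord b c"
    have gA: "g \<in> A0 ord" using Lset_A0[OF b_pos g] .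
    have g0: "good ord c (\<Theta> g z - 0 z)" for z
      using \<Theta>_floor[OF gA Lset_good0[OF g]] by simp
    show "\<exists>p\<in>Lset ord (real q * b) (c + c1). \<forall>z. good ord (c + real 0 * (real q * b)) (\<Theta> g z - p z)"
    proof (rule bexI[of _ 0])
      show "0 \<in> Lset ord (real q * b) (c + c1)" by (rule Lset_zero)
      show "\<forall>z. good ord (c + real 0 * (real q * b)) (\<Theta> g z - 0 z)"
        using g0 by simp
    qed
  qed
next
  case (Suc K)
  show ?case
  proof (intro allI impI)
    fix c and g :: "('n \<Rightarrow> nat) \<Rightarrow> 'a" assume g: "g \<in> Lset ord b c"
    have gA: "g \<in> A0 ord" using Lset_A0[OF b_pos g] .
    define r where "r = c + real (Suc K) * (real q * b)"
    define S where "S = {v. g v \<noteq> 0 \<and> ord (g v) < \<lceil>r\<rceil>}"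
    have S: "finite S" using gA unfolding S_def A0_iff by blast
    define gt where "gt = (\<Sum>v\<in>S. psmult (g v) (pmonom v))"
    have gtz: "gt z = (if z \<in> S then g z else 0)" for z
      unfolding gt_def sum_fun_apply psmult_def pmonom_def
      using S by (simp add: if_distrib[of "\<lambda>x. _ * x"] cong: if_cong)
    define gr where "gr = g - gt"
    have gtA: "gt \<in> A0 ord" unfolding gt_def by (intro A0_sum A0_psmult A0_pmonom)
    have grA: "gr \<in> A0 ord" unfolding gr_def using gA gtA by (rule A0_diff)
    have grg: "good ord r (gr z)" for z
    proof (cases "z \<in> S")
      case True then show ?thesis by (simp add: gr_def gtz)
    next
      case False
      then have "g z = 0 \<or> \<lceil>r\<rceil> \<le> ord (g z)" by (auto simp: S_def)
      then have "good ord r (g z)" by (auto simp: good_def ceiling_le_iff)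
      then show ?thesis using False by (simp add: gr_def gtz)
    qed
    have gS: "\<And>v. v \<in> S \<Longrightarrow> good ord (b * real (deg v) + c) (g v)" using g by (simp add: Lset_iff)
    obtain p0 g' where p0: "p0 \<in> Lset ord (real q * b) (c + c1)" and g': "g' \<in> Lset ord b (c + real q * b)"
      and e0: "\<Theta> gt = p0 + \<Theta> g'"
      using poly_step[OF S gS] unfolding gt_def by blast
    obtain p' where p': "p' \<in> Lset ord (real q * b) (c + real q * b + c1)"
      and c': "\<forall>z. good ord (c + real q * b + real K * (real q * b)) (\<Theta> g' z - p' z)"
      using Suc.IH g' by blast
    have p'': "p' \<in> Lset ord (real q * b) (c + c1)" using p' b_pos by (auto intro: Lset_mono)
    have "g = gt + gr" by (simp add: gr_def)
    then have eg: "\<Theta> g = p0 + \<Theta> g' + \<Theta> gr" using \<Theta>_add[OF gtA grA] e0 by simp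
    have rr: "c + real q * b + real K * (real q * b) = r" by (simp add: r_def algebra_simps)
    have "good ord r (\<Theta> g z - (p0 + p') z)" for z
    proof -
      have e: "\<Theta> g z = p0 z + \<Theta> g' z + \<Theta> gr z" using eg by simp
      have "\<Theta> g z - (p0 + p') z = (\<Theta> g' z - p' z) + \<Theta> gr z"
        unfolding e by (simp add: algebra_simps)
      moreover have "good ord r ((\<Theta> g' z - p' z) + \<Theta> gr z)"
        by (rule good_add) (use c' rr \<Theta>_floor[OF grA grg] in auto)
      ultimately show ?thesis by metis
    qed
    moreover have "p0 + p' \<in> Lset ord (real q * b) (c + c1)" using p0 p'' by (rule Lset_add)
    ultimately show "\<exists>p\<in>Lset ord (real q * b) (c + c1). \<forall>z. good ord (c + real (Suc K) * (real q * b)) (\<Theta> g z - p z)"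
      unfolding r_def by blast
  qed
qed

lemma main: "g \<in> Lset ord b c \<Longrightarrow> \<Theta> g \<in> Lset ord (real q * b) (c + c1)"
proof -
  assume g: "g \<in> Lset ord b c"
  show ?thesis
  proof (rule approx_Lset)
    fix N
    define K where "K = nat \<lceil>(N - c) / (real q * b)\<rceil>"
    have qb: "0 < real q * b" using q_pos b_pos by simp
    have "(N - c) / (real q * b) \<le> real K" unfolding K_def by linarith
    then have "N - c \<le> real K * (real q * b)" using qb by (simp add: divide_le_eq)
    then have NK: "N \<le> c + real K * (real q * b)" by simp
    obtain p where "p \<in> Lset ord (real q * b) (c + c1)"
      and "\<forall>z. good ord (c + real K * (real q * b)) (\<Theta> g z - p z)"
      using main_K g by blast
    then show "\<exists>p\<in>Lset ord (real q * b) (c + c1). \<forall>z. good ord N (\<Theta> g z - p z)"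
      using NK good_mono by blast
  qed
qed

end


theorem theorem4p6:
  fixes ord :: "'a::{comm_ring_1,ring_char_0} \<Rightarrow> int" and \<pi> :: 'a and q :: nat
    and \<sigma> \<Theta> :: "(('n::finite \<Rightarrow> nat) \<Rightarrow> 'a) \<Rightarrow> (('n \<Rightarrow> nat) \<Rightarrow> 'a)"
    and f :: "'n \<Rightarrow> ('n \<Rightarrow> nat) \<Rightarrow> 'a"
    and b_\<sigma> b c1 :: rat
  assumes R: "complete_dvr ord \<pi> q"
    and f_A: "\<forall>i. f i \<in> Aoc ord"
    and b\<sigma>_pos: "b_\<sigma> > 0"
    and f_L: "\<forall>i. psmult \<pi> (f i) \<in> Lset ord (of_rat b_\<sigma>) 0"
    and \<sigma>_endo: "R_alg_endo ord \<sigma>"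
    and \<sigma>_X: "\<forall>i. \<sigma> (pvar i) = padd (ppow (pvar i) q) (psmult \<pi> (f i))"
    and \<Theta>_dwork: "dwork_op ord \<sigma> \<Theta>"
    and \<Theta>_oc: "overconvergent ord \<Theta>"
    and b_pos: "0 < b" and b_le: "b \<le> b_\<sigma>"
    and \<Theta>_basis: "\<forall>u. (\<forall>i. u i < q) \<longrightarrow>
                    \<Theta> (pmonom u) \<in> Lset ord (of_rat (of_nat q * b)) (of_rat c1)"
  shows "\<forall>c::real. \<Theta> ` Lset ord (of_rat b) c \<subseteq> Lset ord (of_rat (of_nat q * b)) (c + of_rat c1)"
proof -
  have vr: "vr ord \<pi>"
  proof
    note R' = R[unfolded complete_dvr_def]
    show "\<And>x. x \<noteq> 0 \<Longrightarrow> 0 \<le> ord x" using R' by simp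
    show "\<And>x y. x \<noteq> 0 \<Longrightarrow> y \<noteq> 0 \<Longrightarrow> x * y \<noteq> 0 \<and> ord (x * y) = ord x + ord y"
      using R' by simp
    show "\<And>x y. x \<noteq> 0 \<Longrightarrow> y \<noteq> 0 \<Longrightarrow> x + y \<noteq> 0 \<Longrightarrow> min (ord x) (ord y) \<le> ord (x + y)"
      using R' by simp
    show "\<And>x y. x \<noteq> 0 \<Longrightarrow> y \<noteq> 0 \<Longrightarrow> ord y \<le> ord x \<Longrightarrow> y dvd x"
      using R' by simp
    show "\<pi> \<noteq> 0" using R' by simp
    show "ord \<pi> = 1" using R' by simp
  qed
  have "\<exists>S :: 'a set. finite S \<and> card S = q \<and> (\<forall>x. \<exists>!s. s \<in> S \<and> \<pi> dvd (x - s))"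
    using R unfolding complete_dvr_def by (elim conjE) assumption
  then obtain S :: "'a set" where S: "finite S" "card S = q" "\<forall>x. \<exists>!s. s \<in> S \<and> \<pi> dvd (x - s)"
    by blast
  have "S \<noteq> {}" using S(3) by blast
  then have "0 < card S" using S(1) by (simp add: card_gt_0_iff)
  then have q_pos: "0 < q" using S(2) by simp
  have qb: "(of_rat (of_nat q * b) :: real) = real q * of_rat b"
    by (simp add: of_rat_mult)
  interpret dw ord \<pi> \<sigma> \<Theta> f q "of_rat b" "of_rat b_\<sigma>" "of_rat c1"
  proof (rule dw.intro[OF vr], unfold_locales)
    show "R_alg_endo ord \<sigma>" by (rule \<sigma>_endo)
    show "\<forall>i. \<sigma> (pvar i) = padd (ppow (pvar i) q) (psmult \<pi> (f i))" by (rule \<sigma>_X)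
    show "dwork_op ord \<sigma> \<Theta>" by (rule \<Theta>_dwork)
    show "0 < (of_rat b :: real)" using b_pos by simp
    show "(of_rat b :: real) \<le> of_rat b_\<sigma>" using b_le by (simp add: of_rat_less_eq)
    show "\<forall>i. psmult \<pi> (f i) \<in> Lset ord (of_rat b_\<sigma>) 0" by (rule f_L)
    show "\<forall>u. (\<forall>i. u i < q) \<longrightarrow> \<Theta> (pmonom u) \<in> Lset ord (real q * of_rat b) (of_rat c1)"
      using \<Theta>_basis qb by simp
    show "0 < q" by (rule q_pos)
  qed
  show ?thesis
  proof (intro allI subsetI)
    fix c :: real and y assume "y \<in> \<Theta> ` Lset ord (of_rat b) c"
    then obtain g where g: "g \<in> Lset ord (of_rat b) c" and y: "y = \<Theta> g" by blast
    show "y \<in> Lset ord (of_rat (of_nat q * b)) (c + of_rat c1)"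
      unfolding y qb by (rule main[OF g])
  qed
qed

end
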